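(* Suppose $\Delta(x,\varepsilon)$ is not independent of $x$. Let $r\ge1$ be the smallest index such that $\Delta_r$ is a nonconstant function, so that $$\Delta(x,\varepsilon)=A(\varepsilon)+\Delta_r(x)\varepsilon^r+o(\varepsilon^r),$$ where $A(\varepsilon)$ is a polynomial in $\varepsilon$ of degree at most $r-1$ with constant coefficients. Then $\Delta_r$ is periodic with period $\mu$, that is, $$\Delta_r(x+\mu)=\Delta_r(x)\quad\text{for all }x\in\mathbb R.$$
   Context: Fix integers $p$ and $q\ge1$ and put $\mu=2\pi p/q$. Let $f:\mathbb R\to\mathbb R$ be a $2\pi$-periodic real-analytic function. For real parameters $\varepsilon,\delta$ set $g(x)=-\delta-\varepsilon f(x)$ and consider the map $T_{\varepsilon,\delta}(x,y)=(x+y+\mu+g(x),\;y+g(x))$ on $\mathbb R^2$. Define ${}_nR$ and ${}_nS$ by $T^n_{\varepsilon,\delta}(x_0,y_0)=(x_0+n\mu+{}_nR,\;y_0+{}_nS)$. There exist $\bar{\bar\varepsilon},\eta>0$ and real-analytic functions $\Delta(x,\varepsilon)$ and $Y(x,\varepsilon)$, defined for $x\in\mathbb R$ and $|\varepsilon|<\bar{\bar\varepsilon}$ and vanishing at $\varepsilon=0$, such that $(\delta,y)=(\Delta(x,\varepsilon),Y(x,\varepsilon))$ is the unique solution with $|\delta|,|y|<\eta$ of ${}_qR(x,y,\varepsilon,\delta)={}_qS(x,y,\varepsilon,\delta)=0$. Write $\Delta(x,\varepsilon)=\sum_{n\ge1}\Delta_n(x)\varepsilon^n$. *)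

theory Defs
  imports "HOL-Analysis.Analysis"
begin

definition mu :: "int \<Rightarrow> int \<Rightarrow> real" where
  "mu p q = 2 * pi * real_of_int p / real_of_int q"

definition Tmap :: "int \<Rightarrow> int \<Rightarrow> (real \<Rightarrow> real) \<Rightarrow> real \<Rightarrow> real \<Rightarrow> real \<times> real \<Rightarrow> real \<times> real" where
  "Tmap p q f eps delta = (\<lambda>(x, y).
     (let g = - delta - eps * f x in (x + y + mu p q + g, y + g)))"

definition iterR :: "int \<Rightarrow> int \<Rightarrow> (real \<Rightarrow> real) \<Rightarrow> nat \<Rightarrow> real \<Rightarrow> real \<Rightarrow> real \<Rightarrow> real \<Rightarrow> real" where
  "iterR p q f n x y eps delta =
     fst ((Tmap p q f eps delta ^^ n) (x, y)) - x - real n * mu p q"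

definition iterS :: "int \<Rightarrow> int \<Rightarrow> (real \<Rightarrow> real) \<Rightarrow> nat \<Rightarrow> real \<Rightarrow> real \<Rightarrow> real \<Rightarrow> real \<Rightarrow> real" where
  "iterS p q f n x y eps delta =
     snd ((Tmap p q f eps delta ^^ n) (x, y)) - y"

definition real_analytic_on :: "(real \<Rightarrow> real) \<Rightarrow> real set \<Rightarrow> bool" where
  "real_analytic_on F S \<longleftrightarrow>
     (\<forall>x0\<in>S. \<exists>r>0. \<exists>a :: nat \<Rightarrow> real. \<forall>x. x \<in> S \<and> \<bar>x - x0\<bar> < r \<longrightarrow>
        (\<lambda>n. a n * (x - x0) ^ n) sums F x)"

definition real_analytic2_on :: "(real \<Rightarrow> real \<Rightarrow> real) \<Rightarrow> (real \<times> real) set \<Rightarrow> bool" where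
  "real_analytic2_on F S \<longleftrightarrow>
     (\<forall>(x0, e0)\<in>S. \<exists>r>0. \<exists>a :: nat \<Rightarrow> nat \<Rightarrow> real. \<forall>x e.
        (x, e) \<in> S \<and> \<bar>x - x0\<bar> < r \<and> \<bar>e - e0\<bar> < r \<longrightarrow>
        ((\<lambda>(m, n). a m n * (x - x0) ^ m * (e - e0) ^ n) has_sum F x e) UNIV)"

end

theory Submission
  imports Defs
begin


lemma powser_tendsto0:
  fixes c :: "nat \<Rightarrow> real"
  assumes s: "0 < s" and h: "\<And>v. \<bar>v\<bar> < s \<Longrightarrow> (\<lambda>n. c n * v^n) sums g v"
  shows "(g \<longlongrightarrow> c 0) (at 0)"
proof -
  have "summable (\<lambda>n. c n * (s/2)^n)" using h[of "s/2"] s by (auto simp: sums_iff)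
  then have "isCont (\<lambda>x. \<Sum>n. c n * x^n) 0" by (rule isCont_powser) (use s in auto)
  then have "((\<lambda>x. \<Sum>n. c n * x^n) \<longlongrightarrow> (\<Sum>n. c n * 0^n)) (at 0)"
    unfolding isCont_def .
  then have "((\<lambda>x. \<Sum>n. c n * x^n) \<longlongrightarrow> c 0) (at 0)"
    by (simp only: powser_zero)
  moreover have "\<forall>\<^sub>F v in at 0. (\<Sum>n. c n * v^n) = g v"
  proof -
    have "\<forall>\<^sub>F v in at (0::real). \<bar>v\<bar> < s"
      unfolding eventually_at by (rule exI[of _ s]) (simp add: s dist_real_def)
    then show ?thesis by eventually_elim (use h in \<open>auto simp: sums_iff\<close>)
  qed
  ultimately show ?thesis by (rule Lim_transform_eventually)
qed

lemma powser_unique0: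
  fixes c :: "nat \<Rightarrow> real"
  assumes s: "0 < s" and h: "\<And>v. \<bar>v\<bar> < s \<Longrightarrow> (\<lambda>n. c n * v^n) sums 0"
  shows "c n = 0"
proof (induction n rule: less_induct)
  case (less n)
  define g where "g v = (if v = 0 then c n else 0)" for v :: real
  have "\<And>v. \<bar>v\<bar> < s \<Longrightarrow> (\<lambda>i. c (i + n) * v^i) sums g v"
  proof -
    fix v :: real assume v: "\<bar>v\<bar> < s"
    show "(\<lambda>i. c (i + n) * v^i) sums g v"
    proof (cases "v = 0")
      case True then show ?thesis using powser_sums_zero[of "\<lambda>i. c (i+n)"] by (simp add: g_def)
    next
      case False
      have "(\<lambda>i. c (i + n) * v^(i+n)) sums (0 - (\<Sum>i<n. c i * v^i))"
        using sums_split_initial_segment[OF h[OF v], of n] by simp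
      also have "(\<Sum>i<n. c i * v^i) = 0" using less by simp
      finally have "(\<lambda>i. c (i + n) * v^(i+n) / v^n) sums (0 / v^n)" by (intro sums_divide) simp
      then show ?thesis using False by (simp add: g_def power_add)
    qed
  qed
  then have "(g \<longlongrightarrow> c n) (at 0)" using powser_tendsto0[OF s, of "\<lambda>i. c (i+n)" g] by simp
  moreover have "(g \<longlongrightarrow> 0) (at 0)"
  proof -
    have "\<forall>\<^sub>F v in at (0::real). 0 = g v" by (auto simp: g_def eventually_at_filter)
    then show ?thesis by (rule Lim_transform_eventually[rotated]) simp
  qed
  ultimately show ?case by (rule tendsto_unique[OF trivial_limit_at])
qed



lemma my_has_sum_diff:
  fixes f g :: "'a \<Rightarrow> real"
  assumes "(f has_sum a) A" "(g has_sum b) A"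
  shows "((\<lambda>x. f x - g x) has_sum (a - b)) A"
proof -
  have "((\<lambda>x. f x + - g x) has_sum (a + - b)) A"
    by (rule has_sum_add[OF assms(1) has_sum_uminusI[OF assms(2)]])
  then show ?thesis by simp
qed

lemma dbl_series:
  fixes a :: "nat \<Rightarrow> nat \<Rightarrow> real"
  assumes s: "0 < s"
    and hsA: "\<forall>u v. \<bar>u\<bar> \<le> s \<and> \<bar>v\<bar> \<le> s \<longrightarrow>
        ((\<lambda>(m,n). a m n * u^m * v^n) has_sum F u v) UNIV"
  shows "\<And>u v. \<bar>u\<bar> \<le> s \<Longrightarrow> \<bar>v\<bar> \<le> s \<Longrightarrow>
           (\<lambda>n. (\<Sum>\<^sub>\<infinity>m. a m n * u^m) * v^n) sums F u v"
    and "summable (\<lambda>n. (\<Sum>\<^sub>\<infinity>m. \<bar>a m n\<bar> * s^m) * s^n)"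
    and "\<And>n u. \<bar>u\<bar> \<le> s \<Longrightarrow>
           \<bar>(\<Sum>\<^sub>\<infinity>m. a m n * u^m) - (\<Sum>\<^sub>\<infinity>m. a m n * 0^m)\<bar> \<le> \<bar>u\<bar> / s * (\<Sum>\<^sub>\<infinity>m. \<bar>a m n\<bar> * s^m)"
proof -
  have hs: "((\<lambda>(m,n). a m n * u^m * v^n) has_sum F u v) UNIV" if "\<bar>u\<bar> \<le> s" "\<bar>v\<bar> \<le> s" for u v
    using hsA that by blast
  have sw: "((\<lambda>(n,m). a m n * u^m * v^n) has_sum F u v) UNIV" if "\<bar>u\<bar> \<le> s" "\<bar>v\<bar> \<le> s" for u v
  proof -
    have "((\<lambda>(m,n). a m n * u^m * v^n) has_sum F u v) (UNIV \<times> UNIV)" using hs[OF that] by simp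
    then show ?thesis by (subst (asm) has_sum_swap) (simp add: case_prod_unfold)
  qed
  have absS: "(\<lambda>(n,m). \<bar>a m n\<bar> * s^m * s^n) summable_on UNIV"
  proof -
    have "(\<lambda>(n,m). a m n * s^m * s^n) summable_on UNIV" using sw[of s s] s
      by (auto intro: has_sum_imp_summable)
    then have "(\<lambda>x. norm ((\<lambda>(n,m). a m n * s^m * s^n) x)) summable_on UNIV"
      using summable_on_iff_abs_summable_on_real by blast
    then show ?thesis using s by (simp add: case_prod_unfold abs_mult)
  qed
  have slice_abs: "(\<lambda>m. \<bar>a m n\<bar> * s^m) summable_on UNIV" for n
  proof -
    have "(\<lambda>m. \<bar>a m n\<bar> * s^m * s^n) summable_on UNIV"
      using summable_on_SigmaD1[of "\<lambda>n m. \<bar>a m n\<bar> * s^m * s^n" UNIV "\<lambda>_. UNIV" n] absS by simp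
    then show ?thesis using summable_on_cmult_left'[of "s^n" "\<lambda>m. \<bar>a m n\<bar> * s^m" UNIV] s by simp
  qed
  have slice: "(\<lambda>m. a m n * u^m) summable_on UNIV" if "\<bar>u\<bar> \<le> s" for n u
  proof -
    have "(\<lambda>m. norm (a m n * u^m)) summable_on UNIV"
      by (rule Infinite_Sum.abs_summable_on_comparison_test'[OF slice_abs])
         (use that s in \<open>auto simp: abs_mult power_abs intro!: mult_left_mono power_mono\<close>)
    then show ?thesis using summable_on_iff_abs_summable_on_real by blast
  qed
  show "(\<lambda>n. (\<Sum>\<^sub>\<infinity>m. a m n * u^m) * v^n) sums F u v" if "\<bar>u\<bar> \<le> s" "\<bar>v\<bar> \<le> s" for u v
  proof -
    have "((\<lambda>n. (\<Sum>\<^sub>\<infinity>m. a m n * u^m) * v^n) has_sum F u v) UNIV"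
    proof (rule has_sum_SigmaD[where B="\<lambda>_. UNIV" and f="\<lambda>(n,m). a m n * u^m * v^n"])
      show "((\<lambda>(n,m). a m n * u^m * v^n) has_sum F u v) (UNIV \<times> UNIV)" using sw[OF that] by simp
      fix n
      show "((\<lambda>m. (\<lambda>(n,m). a m n * u^m * v^n) (n, m)) has_sum (\<Sum>\<^sub>\<infinity>m. a m n * u^m) * v^n) UNIV"
        using has_sum_cmult_left[OF has_sum_infsum[OF slice[OF that(1)]], where c="v^n"] by simp
    qed
    then show ?thesis by (rule has_sum_imp_sums)
  qed
  show "summable (\<lambda>n. (\<Sum>\<^sub>\<infinity>m. \<bar>a m n\<bar> * s^m) * s^n)"
  proof -
    have "((\<lambda>n. (\<Sum>\<^sub>\<infinity>m. \<bar>a m n\<bar> * s^m) * s^n) has_sum (\<Sum>\<^sub>\<infinity>x. (\<lambda>(n,m). \<bar>a m n\<bar> * s^m * s^n) x)) UNIV"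
    proof (rule has_sum_SigmaD[where B="\<lambda>_. UNIV" and f="\<lambda>(n,m). \<bar>a m n\<bar> * s^m * s^n"])
      show "((\<lambda>(n,m). \<bar>a m n\<bar> * s^m * s^n) has_sum (\<Sum>\<^sub>\<infinity>x. (\<lambda>(n,m). \<bar>a m n\<bar> * s^m * s^n) x)) (UNIV \<times> UNIV)"
        using has_sum_infsum[OF absS] by simp
      fix n
      show "((\<lambda>m. (\<lambda>(n,m). \<bar>a m n\<bar> * s^m * s^n) (n, m)) has_sum (\<Sum>\<^sub>\<infinity>m. \<bar>a m n\<bar> * s^m) * s^n) UNIV"
        using has_sum_cmult_left[OF has_sum_infsum[OF slice_abs], where c="s^n"] by simp
    qed
    then show ?thesis by (rule sums_summable[OF has_sum_imp_sums])
  qed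
  show "\<bar>(\<Sum>\<^sub>\<infinity>m. a m n * u^m) - (\<Sum>\<^sub>\<infinity>m. a m n * 0^m)\<bar> \<le> \<bar>u\<bar> / s * (\<Sum>\<^sub>\<infinity>m. \<bar>a m n\<bar> * s^m)"
    if u: "\<bar>u\<bar> \<le> s" for n u
  proof -
    have hd: "((\<lambda>m. a m n * u^m - a m n * 0^m) has_sum ((\<Sum>\<^sub>\<infinity>m. a m n * u^m) - (\<Sum>\<^sub>\<infinity>m. a m n * 0^m))) UNIV"
      by (rule my_has_sum_diff; rule has_sum_infsum; rule slice) (use u s in auto)
    have "norm ((\<Sum>\<^sub>\<infinity>m. a m n * u^m) - (\<Sum>\<^sub>\<infinity>m. a m n * 0^m)) \<le> (\<Sum>\<^sub>\<infinity>m. \<bar>u\<bar> / s * (\<bar>a m n\<bar> * s^m))"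
    proof (rule norm_infsum_le[OF hd])
      show "((\<lambda>m. \<bar>u\<bar> / s * (\<bar>a m n\<bar> * s^m)) has_sum (\<Sum>\<^sub>\<infinity>m. \<bar>u\<bar> / s * (\<bar>a m n\<bar> * s^m))) UNIV"
        by (rule has_sum_infsum, rule summable_on_cmult_right, rule slice_abs)
      fix m :: nat
      show "norm (a m n * u^m - a m n * 0^m) \<le> \<bar>u\<bar> / s * (\<bar>a m n\<bar> * s^m)"
      proof (cases m)
        case 0 then show ?thesis using s by simp
      next
        case (Suc k)
        have "\<bar>u\<bar>^k \<le> s^k" using u by (intro power_mono) auto
        then have "\<bar>u\<bar> * \<bar>u\<bar>^k \<le> \<bar>u\<bar> * s^k" by (intro mult_left_mono) auto
        also have "\<bar>u\<bar> * s^k = \<bar>u\<bar> / s * s^Suc k" using s by simp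
        finally have "\<bar>a m n\<bar> * (\<bar>u\<bar> * \<bar>u\<bar>^k) \<le> \<bar>a m n\<bar> * (\<bar>u\<bar> / s * s^Suc k)"
          by (intro mult_left_mono) auto
        then show ?thesis using Suc s by (simp add: abs_mult power_abs mult_ac)
      qed
    qed
    then show ?thesis using infsum_cmult_right[of "\<bar>u\<bar>/s" "\<lambda>m. \<bar>a m n\<bar> * s^m" UNIV] slice_abs
      by simp
  qed
qed



lemma Tmap_eq: "Tmap p q f e d (x,y) = (x + y + mu p q - d - e * f x, y - d - e * f x)"
  by (simp add: Tmap_def Let_def)

lemma per_nat:
  assumes per: "\<And>x. f (x + 2*pi) = f x"
  shows "f (x + 2*pi*real n) = f x"
proof (induction n)
  case (Suc n)
  have "f (x + 2*pi*real (Suc n)) = f ((x + 2*pi*real n) + 2*pi)" by (simp add: algebra_simps)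
  also have "\<dots> = f x" using per Suc by simp
  finally show ?case .
qed simp

lemma per_int:
  assumes per: "\<And>x. f (x + 2*pi) = f x"
  shows "f (x + 2*pi*real_of_int k) = f x"
proof (cases "k \<ge> 0")
  case True
  then obtain n where "k = int n" by (metis nonneg_int_cases)
  then show ?thesis using per_nat[where f=f, OF per] by simp
next
  case False
  define n where "n = nat (- k)"
  have k: "k = - int n" using False by (simp add: n_def)
  have "f x = f ((x + 2*pi*real_of_int k) + 2*pi*real n)" using per_nat[where f=f, OF per, of "x + 2*pi*real_of_int k" n] k
    by (simp add: algebra_simps)
  then show ?thesis using per_nat[where f=f, OF per, of "x + 2*pi*real_of_int k" n] by simp
qed

lemma orbit:
  assumes q: "q \<ge> 1" and per: "\<And>x. f (x + 2*pi) = f x"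
    and R: "iterR p q f (nat q) x y e d = 0" and S: "iterS p q f (nat q) x y e d = 0"
  shows "iterR p q f (nat q) (x + y + mu p q - d - e * f x) (y - d - e * f x) e d = 0 \<and>
         iterS p q f (nat q) (x + y + mu p q - d - e * f x) (y - d - e * f x) e d = 0"
proof -
  define T where "T = Tmap p q f e d"
  have Nmu: "real (nat q) * mu p q = 2*pi*real_of_int p"
    using q by (simp add: mu_def)
  have TN: "(T ^^ nat q) (x,y) = (x + 2*pi*real_of_int p, y)"
    using R S Nmu unfolding iterR_def iterS_def T_def by (intro prod_eqI) auto
  define x1 where "x1 = x + y + mu p q - d - e * f x"
  define y1 where "y1 = y - d - e * f x"
  have T1: "T (x,y) = (x1, y1)" unfolding T_def x1_def y1_def by (rule Tmap_eq)
  have "(T ^^ nat q) (x1, y1) = T ((T ^^ nat q) (x,y))" unfolding T1[symmetric] by (rule funpow_swap1[symmetric])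
  also have "\<dots> = T (x + 2*pi*real_of_int p, y)" by (simp only: TN)
  also have "\<dots> = (x1 + 2*pi*real_of_int p, y1)"
    unfolding T_def Tmap_eq x1_def y1_def using per_int[where f=f, OF per, of x p] by (simp add: algebra_simps)
  finally have E: "(T ^^ nat q) (x1, y1) = (x1 + 2*pi*real_of_int p, y1)" .
  have "iterR p q f (nat q) x1 y1 e d = 0 \<and> iterS p q f (nat q) x1 y1 e d = 0"
    unfolding iterR_def iterS_def T_def[symmetric] E using Nmu by simp
  then show ?thesis by (simp only: x1_def y1_def)
qed



lemma powser_shift_tendsto:
  fixes d :: "nat \<Rightarrow> real"
  assumes s: "0 < s" and h: "\<And>e. \<bar>e\<bar> < s \<Longrightarrow> (\<lambda>n. d n * e^n) sums S e"
    and z: "\<And>n. n < r \<Longrightarrow> d n = 0"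
  shows "((\<lambda>e. S e / e^r) \<longlongrightarrow> d r) (at 0)"
proof -
  define g where "g e = (if e = 0 then d r else S e / e^r)" for e :: real
  have "\<And>e. \<bar>e\<bar> < s \<Longrightarrow> (\<lambda>i. d (i + r) * e^i) sums g e"
  proof -
    fix e :: real assume e: "\<bar>e\<bar> < s"
    show "(\<lambda>i. d (i + r) * e^i) sums g e"
    proof (cases "e = 0")
      case True then show ?thesis using powser_sums_zero[of "\<lambda>i. d (i+r)"] by (simp add: g_def)
    next
      case False
      have "(\<lambda>i. d (i + r) * e^(i+r)) sums (S e - (\<Sum>i<r. d i * e^i))"
        using sums_split_initial_segment[OF h[OF e], of r] by simp
      also have "(\<Sum>i<r. d i * e^i) = 0" using z by simp
      finally have "(\<lambda>i. d (i + r) * e^(i+r) / e^r) sums (S e / e^r)" by (intro sums_divide) simp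
      then show ?thesis using False by (simp add: g_def power_add)
    qed
  qed
  then have "(g \<longlongrightarrow> d r) (at 0)" using powser_tendsto0[OF s, of "\<lambda>i. d (i+r)" g] by simp
  moreover have "\<forall>\<^sub>F e in at (0::real). g e = S e / e^r" by (auto simp: g_def eventually_at_filter)
  ultimately show ?thesis by (rule Lim_transform_eventually)
qed

theorem lemma2:
  fixes p q :: int and f :: "real \<Rightarrow> real"
    and epsb eta :: real
    and Delta Y :: "real \<Rightarrow> real \<Rightarrow> real"
    and Dn :: "nat \<Rightarrow> real \<Rightarrow> real"
    and r :: nat
  assumes q_pos: "q \<ge> 1"
    and f_per: "\<And>x. f (x + 2 * pi) = f x"
    and f_an: "real_analytic_on f UNIV"
    and epsb_pos: "epsb > 0" and eta_pos: "eta > 0"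
    and Delta_an: "real_analytic2_on Delta (UNIV \<times> {e. \<bar>e\<bar> < epsb})"
    and Y_an: "real_analytic2_on Y (UNIV \<times> {e. \<bar>e\<bar> < epsb})"
    and Delta_0: "\<And>x. Delta x 0 = 0"
    and Y_0: "\<And>x. Y x 0 = 0"
    and sol: "\<And>x e. \<bar>e\<bar> < epsb \<Longrightarrow>
       \<bar>Delta x e\<bar> < eta \<and> \<bar>Y x e\<bar> < eta \<and>
       iterR p q f (nat q) x (Y x e) e (Delta x e) = 0 \<and>
       iterS p q f (nat q) x (Y x e) e (Delta x e) = 0"
    and uniq: "\<And>x e d y. \<bar>e\<bar> < epsb \<Longrightarrow> \<bar>d\<bar> < eta \<Longrightarrow> \<bar>y\<bar> < eta \<Longrightarrow>
       iterR p q f (nat q) x y e d = 0 \<Longrightarrow> iterS p q f (nat q) x y e d = 0 \<Longrightarrow>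
       d = Delta x e \<and> y = Y x e"
    and Dn_series: "\<And>x e. \<bar>e\<bar> < epsb \<Longrightarrow>
       (\<lambda>n. Dn (Suc n) x * e ^ Suc n) sums Delta x e"
    and nonindep: "\<exists>x1 x2 e. \<bar>e\<bar> < epsb \<and> Delta x1 e \<noteq> Delta x2 e"
    and r_pos: "r \<ge> 1"
    and r_nonconst: "\<exists>a b. Dn r a \<noteq> Dn r b"
    and below_r_const: "\<And>n a b. 1 \<le> n \<Longrightarrow> n < r \<Longrightarrow> Dn n a = Dn n b"
  shows "\<forall>x. Dn r (x + mu p q) = Dn r x"
proof
  fix x :: real
  define z0 where "z0 = x + mu p q"
  define D' where "D' n z = (if n = 0 then 0 else Dn n z)" for n z
  have Dser: "(\<lambda>n. D' n z * e^n) sums Delta z e" if "\<bar>e\<bar> < epsb" for z e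
  proof -
    have "(\<lambda>n. D' (Suc n) z * e^Suc n) sums Delta z e" using Dn_series[OF that] by (simp add: D'_def)
    then show ?thesis by (subst (asm) sums_Suc_iff) (simp add: D'_def)
  qed
  have "(z0, 0) \<in> UNIV \<times> {e. \<bar>e\<bar> < epsb}" using epsb_pos by simp
  from bspec[OF Delta_an[unfolded real_analytic2_on_def] this]
  obtain \<rho> aD where \<rho>: "\<rho> > 0" and aD: "\<And>x' e. (x', e) \<in> UNIV \<times> {e. \<bar>e\<bar> < epsb} \<and> \<bar>x' - z0\<bar> < \<rho> \<and> \<bar>e - 0\<bar> < \<rho> \<Longrightarrow>
      ((\<lambda>(m, n). aD m n * (x' - z0) ^ m * (e - 0) ^ n) has_sum Delta x' e) UNIV"
    by auto
  define sD where "sD = min \<rho> epsb / 2"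
  have sD: "0 < sD" "sD < \<rho>" "sD < epsb" using \<rho> epsb_pos by (auto simp: sD_def)
  have hsD: "\<forall>u v. \<bar>u\<bar> \<le> sD \<and> \<bar>v\<bar> \<le> sD \<longrightarrow> ((\<lambda>(m,n). aD m n * u^m * v^n) has_sum Delta (z0+u) v) UNIV"
  proof (intro allI impI)
    fix u v assume uv: "\<bar>u\<bar> \<le> sD \<and> \<bar>v\<bar> \<le> sD"
    show "((\<lambda>(m,n). aD m n * u^m * v^n) has_sum Delta (z0+u) v) UNIV"
      using aD[of "z0+u" v] uv sD by simp
  qed
  note DD = dbl_series[where F="\<lambda>u v. Delta (z0+u) v", OF sD(1) hsD]
  define cD where "cD n u = (\<Sum>\<^sub>\<infinity>m. aD m n * u^m)" for n u
  define A where "A n = (\<Sum>\<^sub>\<infinity>m. \<bar>aD m n\<bar> * sD^m)" for n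
  have coef: "cD n u = D' n (z0+u)" if u: "\<bar>u\<bar> \<le> sD" for n u
  proof -
    have "(\<lambda>n. (cD n u - D' n (z0+u)) * v^n) sums 0" if "\<bar>v\<bar> < sD" for v
      using sums_diff[OF DD(1)[OF u, of v] Dser[of v "z0+u"]] that sD
      by (simp add: cD_def left_diff_distrib)
    from powser_unique0[OF sD(1) this] show ?thesis by simp
  qed
  have cz: "cD n u - cD n 0 = 0" if "\<bar>u\<bar> \<le> sD" "n < r" for n u
    using coef[OF that(1)] coef[of 0] sD below_r_const[of n "z0+u" z0] that by (auto simp: D'_def)
  define K where "K = (\<Sum>n. A (n+r) * sD^n) / sD"
  have Asum: "summable (\<lambda>n. A (n+r) * sD^n)"
    using DD(2) summable_powser_ignore_initial_segment[of A r sD] by (simp add: A_def)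
  have A0: "A n \<ge> 0" for n unfolding A_def by (rule infsum_nonneg) (use sD in auto)
  have bound: "\<bar>Delta (z0+u) v - Delta z0 v\<bar> \<le> K * \<bar>u\<bar> * \<bar>v\<bar>^r"
    if uv: "\<bar>u\<bar> \<le> sD" "\<bar>v\<bar> \<le> sD" for u v
  proof -
    define t where "t i = (cD (i+r) u - cD (i+r) 0) * v^(i+r)" for i
    define g where "g i = \<bar>u\<bar> / sD * \<bar>v\<bar>^r * (A (i+r) * sD^i)" for i
    have "(\<lambda>n. (cD n u - cD n 0) * v^n) sums (Delta (z0+u) v - Delta z0 v)"
      using sums_diff[OF DD(1)[OF uv] DD(1)[of 0 v]] uv sD by (simp add: cD_def left_diff_distrib)
    from sums_split_initial_segment[OF this, of r]
    have ser: "t sums (Delta (z0+u) v - Delta z0 v)" unfolding t_def[abs_def] using cz[OF uv(1)] by simp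
    have tg: "norm (t i) \<le> g i" for i
    proof -
      have 1: "\<bar>cD (i+r) u - cD (i+r) 0\<bar> \<le> \<bar>u\<bar>/sD * A (i+r)"
        using DD(3)[OF uv(1)] by (simp add: cD_def A_def)
      have "\<bar>v\<bar>^i \<le> sD^i" using uv by (intro power_mono) auto
      then have 2: "\<bar>v\<bar>^(i+r) \<le> \<bar>v\<bar>^r * sD^i"
        by (simp add: power_add mult.commute mult_right_mono)
      have "norm (t i) = \<bar>cD (i+r) u - cD (i+r) 0\<bar> * \<bar>v\<bar>^(i+r)" by (simp add: t_def abs_mult power_abs)
      also have "\<dots> \<le> (\<bar>u\<bar>/sD * A (i+r)) * (\<bar>v\<bar>^r * sD^i)"
        using 1 2 by (intro mult_mono) (auto simp: A0 sD(1) less_imp_le)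
      finally show ?thesis by (simp add: g_def mult_ac)
    qed
    have gs: "summable g" unfolding g_def by (rule summable_mult[OF Asum])
    have tn: "summable (\<lambda>i. norm (t i))" by (rule summable_comparison_test'[OF gs]) (use tg in simp)
    have "\<bar>Delta (z0+u) v - Delta z0 v\<bar> = norm (suminf t)" using ser by (simp add: sums_iff)
    also have "\<dots> \<le> (\<Sum>i. norm (t i))" by (rule summable_norm[OF tn])
    also have "\<dots> \<le> suminf g" by (rule suminf_le[OF tg tn gs])
    also have "suminf g = K * \<bar>u\<bar> * \<bar>v\<bar>^r"
      unfolding g_def K_def using suminf_mult[OF Asum, of "\<bar>u\<bar> / sD * \<bar>v\<bar>^r"] sD(1) by (simp add: field_simps)
    finally show ?thesis .
  qed
  have "((\<lambda>e. Delta x e) \<longlongrightarrow> D' 0 x) (at 0)" by (rule powser_tendsto0[OF epsb_pos]) (rule Dser)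
  then have Dlim: "((\<lambda>e. Delta x e) \<longlongrightarrow> 0) (at 0)" by (simp add: D'_def)
  have "(x, 0) \<in> UNIV \<times> {e. \<bar>e\<bar> < epsb}" using epsb_pos by simp
  from bspec[OF Y_an[unfolded real_analytic2_on_def] this]
  obtain \<rho>Y aY where \<rho>Y: "\<rho>Y > 0" and aY: "\<And>x' e. (x', e) \<in> UNIV \<times> {e. \<bar>e\<bar> < epsb} \<and> \<bar>x' - x\<bar> < \<rho>Y \<and> \<bar>e - 0\<bar> < \<rho>Y \<Longrightarrow>
      ((\<lambda>(m, n). aY m n * (x' - x) ^ m * (e - 0) ^ n) has_sum Y x' e) UNIV"
    by auto
  define sY where "sY = min \<rho>Y epsb / 2"
  have sY: "0 < sY" "sY < \<rho>Y" "sY < epsb" using \<rho>Y epsb_pos by (auto simp: sY_def)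
  have hsY: "\<forall>u v. \<bar>u\<bar> \<le> sY \<and> \<bar>v\<bar> \<le> sY \<longrightarrow> ((\<lambda>(m,n). aY m n * u^m * v^n) has_sum Y (x+u) v) UNIV"
  proof (intro allI impI)
    fix u v assume uv: "\<bar>u\<bar> \<le> sY \<and> \<bar>v\<bar> \<le> sY"
    show "((\<lambda>(m,n). aY m n * u^m * v^n) has_sum Y (x+u) v) UNIV"
      using aY[of "x+u" v] uv sY by simp
  qed
  note DY = dbl_series[where F="\<lambda>u v. Y (x+u) v", OF sY(1) hsY]
  have "((\<lambda>e. Y x e) \<longlongrightarrow> (\<Sum>\<^sub>\<infinity>m. aY m 0 * 0^m)) (at 0)"
    by (rule powser_tendsto0[OF sY(1), of "\<lambda>n. (\<Sum>\<^sub>\<infinity>m. aY m n * 0^m)"]) (use DY(1)[of 0] sY in auto)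
  moreover have "(\<Sum>\<^sub>\<infinity>m. aY m 0 * 0^m) = 0"
    using DY(1)[of 0 0] sY Y_0[of x] by simp
  ultimately have Ylim: "((\<lambda>e. Y x e) \<longlongrightarrow> 0) (at 0)" by simp
  define h where "h e = Y x e - Delta x e - e * f x" for e
  have hlim: "(h \<longlongrightarrow> 0) (at 0)"
  proof -
    have "((\<lambda>e. Y x e - Delta x e - e * f x) \<longlongrightarrow> 0 - 0 - 0 * f x) (at 0)"
      by (intro tendsto_intros Ylim Dlim)
    then show ?thesis by (simp add: h_def[abs_def])
  qed
  have "((\<lambda>e. (Delta x e - Delta z0 e) / e^r) \<longlongrightarrow> D' r x - D' r z0) (at 0)"
  proof (rule powser_shift_tendsto[OF epsb_pos])
    show "(\<lambda>n. (D' n x - D' n z0) * e^n) sums (Delta x e - Delta z0 e)" if "\<bar>e\<bar> < epsb" for e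
      using sums_diff[OF Dser[OF that, of x] Dser[OF that, of z0]] by (simp add: left_diff_distrib)
    show "D' n x - D' n z0 = 0" if "n < r" for n
      using below_r_const[of n x z0] that by (auto simp: D'_def)
  qed
  then have Qlim: "((\<lambda>e. (Delta x e - Delta z0 e) / e^r) \<longlongrightarrow> Dn r x - Dn r z0) (at 0)"
    using r_pos by (simp add: D'_def)
  have Q0: "((\<lambda>e. (Delta x e - Delta z0 e) / e^r) \<longlongrightarrow> 0) (at 0)"
  proof (rule Lim_null_comparison)
    show "((\<lambda>e. K * \<bar>h e\<bar>) \<longlongrightarrow> 0) (at 0)"
      using tendsto_mult_right_zero[OF tendsto_rabs_zero[OF hlim], of K] by simp
    have ev1: "\<forall>\<^sub>F e in at 0. \<bar>h e\<bar> < min sD eta"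
      using tendstoD[OF hlim, of "min sD eta"] sD eta_pos by (simp add: dist_real_def)
    have ev2: "\<forall>\<^sub>F e in at (0::real). e \<noteq> 0 \<and> \<bar>e\<bar> < sD"
      using sD(1) by (auto simp: eventually_at dist_real_def intro!: exI[of _ sD])
    show "\<forall>\<^sub>F e in at 0. norm ((Delta x e - Delta z0 e) / e^r) \<le> K * \<bar>h e\<bar>"
      using ev1 ev2
    proof eventually_elim
      case (elim e)
      have e: "\<bar>e\<bar> < epsb" using elim sD by auto
      note S = sol[OF e, of x]
      have O: "iterR p q f (nat q) (z0 + h e) (h e) e (Delta x e) = 0 \<and>
               iterS p q f (nat q) (z0 + h e) (h e) e (Delta x e) = 0"
        using orbit[where f=f, OF q_pos f_per, of p x "Y x e" e "Delta x e"] S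
        by (simp add: z0_def h_def algebra_simps)
      have eqD: "Delta x e = Delta (z0 + h e) e"
        using uniq[OF e _ _ O[THEN conjunct1] O[THEN conjunct2]] S elim by auto
      have "\<bar>Delta (z0 + h e) e - Delta z0 e\<bar> \<le> K * \<bar>h e\<bar> * \<bar>e\<bar>^r"
        using bound[of "h e" e] elim by auto
      moreover have "\<bar>e\<bar>^r > 0" using elim by simp
      ultimately show ?case using eqD by (simp add: abs_divide power_abs divide_le_eq mult_ac)
    qed
  qed
  have "Dn r x - Dn r z0 = 0" using tendsto_unique[OF trivial_limit_at Qlim Q0] .
  then show "Dn r (x + mu p q) = Dn r x" by (simp add: z0_def)
qed

end
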